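(* Let $\mathcal{T}=(V,E,L)$ be a trellis of length $n$ with labels in $\mathbb{Q}[\Sigma]$, and let $v\neq v'$ be two vertices lying in the same layer $V_j$ with $1\le j\le n-1$ that are mergeable, i.e. $$\mathcal{P}(v)\mathcal{F}(v)+\mathcal{P}(v')\mathcal{F}(v')=\mathcal{P}(v)\mathcal{F}(v')+\mathcal{P}(v')\mathcal{F}(v)\quad\text{in }\mathbb{Q}[\Sigma^+].$$ Let $\mathcal{T}^*=(V^*,E^*,L^* )$ be the trellis obtained by merging $v$ and $v'$. Then $\mathcal{C}(\mathcal{T}^* )=\mathcal{C}(\mathcal{T})$.
   Context: $\Sigma$ is a finite alphabet, $\Sigma^+$ is the semigroup of nonempty finite strings over $\Sigma$ under concatenation, and $\mathbb{Q}[\Sigma^+]$ is its semigroup algebra over $\mathbb{Q}$: finite formal sums $\sum a_{\boldsymbol\sigma}\boldsymbol\sigma$ with $a_{\boldsymbol\sigma}\in\mathbb{Q}$, with multiplication given by concatenation extended bilinearly. $\mathbb{Q}[\Sigma]\subseteq\mathbb{Q}[\Sigma^+]$ denotes the formal $\mathbb{Q}$-linear combinations of single symbols. A trellis $\mathcal{T}=(V,E,L)$ of length $n$ is a directed graph whose vertex set is partitioned as $V=V_0\cup\dots\cup V_n$, with $V_0=\{\mathrm{root}\}$, $V_n=\{\mathrm{toor}\}$, every edge going from some $V_{j-1}$ to $V_j$ ($j\in[n]$), together with an edge-labelling $L:E\to\mathbb{Q}[\Sigma]$; extend $L$ to $V\times V$ by $L(u,w)=0$ if $(u,w)\notin E$.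 The label of a path is the product (in $\mathbb{Q}[\Sigma^+]$) of its edge labels in order. $\mathcal{C}(\mathcal{T})\in\mathbb{Q}[\Sigma^+]$ is the sum of the labels of all root-to-toor paths (this encodes the multiset of path label strings). For a vertex $w$, the past $\mathcal{P}(w)$ is the sum of labels of all paths from the root to $w$ and the future $\mathcal{F}(w)$ is the sum of labels of all paths from $w$ to the toor. Merging $v,v'\in V_j$: set $V^*=(V\setminus\{v,v'\})\cup\{v^*\}$ with $v^*\in V^*_j$; keep every edge $(w,w')$ of $E$ with $w,w'\notin\{v,v'\}$ with the same label; for every $w\in V_{j-1}$ put $L^*(w,v^* )=L(w,v)+L(w,v')$; for every $w\in V_{j+1}$ put $L^*(v^*,w)=\tfrac12\big(L(v,w)+L(v',w)\big)$ (edges with label $0$ are regarded as absent). *)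

theory Defs
  imports Complex_Main "HOL-Library.Function_Algebras"
begin

text \<open>Elements of the semigroup algebra Q[Sigma^+] are represented as coefficient
functions on strings (lists over the alphabet). All elements occurring here have finite
support and vanish on the empty string; the embedding of Q[Sigma^+] into the monoid
algebra Q[Sigma^*] is injective and multiplicative, so equalities are the same.\<close>

type_synonym 's alg = "'s list \<Rightarrow> rat"

definition conv :: "'s alg \<Rightarrow> 's alg \<Rightarrow> 's alg" where
  "conv f g = (\<lambda>w. \<Sum>i\<le>length w. f (take i w) * g (drop i w))"

definition in_QSigma :: "'s alg \<Rightarrow> bool" where
  "in_QSigma f \<longleftrightarrow> (\<forall>w. f w \<noteq> 0 \<longrightarrow> length w = 1)"

text \<open>A trellis of length n: layers V 0, ..., V n (finite, pairwise disjoint),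
V 0 = {rt}, V n = {tr}; labels L u w (0 meaning: no edge) are in Q[Sigma]
and nonzero only from some layer j-1 to layer j, j in [n].\<close>

definition trellis :: "nat \<Rightarrow> (nat \<Rightarrow> 'v set) \<Rightarrow> ('v \<Rightarrow> 'v \<Rightarrow> 's alg) \<Rightarrow> 'v \<Rightarrow> 'v \<Rightarrow> bool" where
  "trellis n V L rt tr \<longleftrightarrow>
     (\<forall>j\<le>n. finite (V j)) \<and>
     (\<forall>i\<le>n. \<forall>j\<le>n. i \<noteq> j \<longrightarrow> V i \<inter> V j = {}) \<and>
     V 0 = {rt} \<and> V n = {tr} \<and>
     (\<forall>u w. L u w \<noteq> 0 \<longrightarrow> (\<exists>j\<in>{1..n}. u \<in> V (j - 1) \<and> w \<in> V j)) \<and>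
     (\<forall>u w. in_QSigma (L u w))"

fun plab :: "('v \<Rightarrow> 'v \<Rightarrow> 's alg) \<Rightarrow> 'v list \<Rightarrow> 's alg" where
  "plab L (x # y # []) = L x y"
| "plab L (x # y # z # zs) = conv (L x y) (plab L (y # z # zs))"
| "plab L _ = (\<lambda>_. 0)"

definition psum :: "(nat \<Rightarrow> 'v set) \<Rightarrow> ('v \<Rightarrow> 'v \<Rightarrow> 's alg) \<Rightarrow> 'v \<Rightarrow> 'v \<Rightarrow> nat \<Rightarrow> nat \<Rightarrow> 's alg" where
  "psum V L a b i k =
     (\<Sum>xs\<in>{xs. length xs = Suc (k - i) \<and> (\<forall>t\<le>k - i. xs ! t \<in> V (i + t))
               \<and> hd xs = a \<and> last xs = b}. plab L xs)"

definition code :: "nat \<Rightarrow> (nat \<Rightarrow> 'v set) \<Rightarrow> ('v \<Rightarrow> 'v \<Rightarrow> 's alg) \<Rightarrow> 'v \<Rightarrow> 'v \<Rightarrow> 's alg" where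
  "code n V L rt tr = psum V L rt tr 0 n"

definition past :: "(nat \<Rightarrow> 'v set) \<Rightarrow> ('v \<Rightarrow> 'v \<Rightarrow> 's alg) \<Rightarrow> 'v \<Rightarrow> nat \<Rightarrow> 'v \<Rightarrow> 's alg" where
  "past V L rt j w = psum V L rt w 0 j"

definition future :: "nat \<Rightarrow> (nat \<Rightarrow> 'v set) \<Rightarrow> ('v \<Rightarrow> 'v \<Rightarrow> 's alg) \<Rightarrow> 'v \<Rightarrow> nat \<Rightarrow> 'v \<Rightarrow> 's alg" where
  "future n V L tr j w = psum V L w tr j n"

text \<open>Merging v, v' in layer j: the merged vertex v* is None, other vertices a are Some a.\<close>

definition merge_V :: "(nat \<Rightarrow> 'v set) \<Rightarrow> nat \<Rightarrow> 'v \<Rightarrow> 'v \<Rightarrow> nat \<Rightarrow> 'v option set" where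
  "merge_V V j v v' i = Some ` (V i - {v, v'}) \<union> (if i = j then {None} else {})"

definition merge_L :: "(nat \<Rightarrow> 'v set) \<Rightarrow> ('v \<Rightarrow> 'v \<Rightarrow> 's alg) \<Rightarrow> nat \<Rightarrow> 'v \<Rightarrow> 'v
      \<Rightarrow> 'v option \<Rightarrow> 'v option \<Rightarrow> 's alg" where
  "merge_L V L j v v' x y =
     (case (x, y) of
        (Some a, Some b) \<Rightarrow> if a \<notin> {v, v'} \<and> b \<notin> {v, v'} then L a b else (\<lambda>_. 0)
      | (Some a, None) \<Rightarrow> if a \<in> V (j - 1) then (\<lambda>w. L a v w + L a v' w) else (\<lambda>_. 0)
      | (None, Some b) \<Rightarrow> if b \<in> V (j + 1) then (\<lambda>w. (1/2) * (L v b w + L v' b w)) else (\<lambda>_. 0)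
      | (None, None) \<Rightarrow> (\<lambda>_. 0))"

end

theory Submission
  imports Defs
begin

lemma sum_fun_apply: "(sum f A) x = (\<Sum>a\<in>A. f a x)"
  by (induction A rule: infinite_finite_induct) auto

lemma conv_add_left: "conv (f + g) h = conv f h + conv g h"
  by (rule ext) (simp add: conv_def distrib_right sum.distrib)

lemma conv_add_right: "conv h (f + g) = conv h f + conv h g"
  by (rule ext) (simp add: conv_def distrib_left sum.distrib)

lemma conv_zero_left[simp]: "conv 0 h = 0"
  by (rule ext) (simp add: conv_def)

lemma conv_zero_right[simp]: "conv h 0 = 0"
  by (rule ext) (simp add: conv_def)

lemma conv_sum_left: "conv (\<Sum>a\<in>A. f a) h = (\<Sum>a\<in>A. conv (f a) h)"
  proof (induction A rule: infinite_finite_induct)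
  case (insert x F) then show ?case by (metis sum.insert conv_add_left)
qed (simp_all add: conv_def)

lemma conv_sum_right: "conv h (\<Sum>a\<in>A. f a) = (\<Sum>a\<in>A. conv h (f a))"
  proof (induction A rule: infinite_finite_induct)
  case (insert x F) then show ?case by (metis sum.insert conv_add_right)
qed (simp_all add: conv_def)

lemma conv_smult_right: "conv f (\<lambda>w. c * g w) = (\<lambda>w. c * conv f g w)"
  by (rule ext) (simp add: conv_def sum_distrib_left algebra_simps)

lemma conv_smult_left: "conv (\<lambda>w. c * g w) f = (\<lambda>w. c * conv g f w)"
  by (rule ext) (simp add: conv_def sum_distrib_left algebra_simps)

lemma conv_assoc: "conv (conv f g) h = conv f (conv g h)"
proof (rule ext)
  fix w :: "'a list"
  define n where "n = length w"
  define G where "G = (\<lambda>p q. f (take p w) * g (take q (drop p w)) * h (drop (p+q) w))"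
  have "conv (conv f g) h w = (\<Sum>k\<le>n. \<Sum>p\<le>k. G p (k - p))"
    unfolding conv_def n_def[symmetric] G_def
    by (rule sum.cong[OF refl], simp add: sum_distrib_right n_def min_def take_drop)
  also have "\<dots> = (\<Sum>(p,q)\<in>{(p,q). p+q \<le> n}. G p q)"
    by (rule sum.triangle_reindex_eq[symmetric])
  also have "{(p,q). p+q \<le> n} = Sigma {..n} (\<lambda>p. {..n-p})" by auto
  also have "(\<Sum>(p,q)\<in>Sigma {..n} (\<lambda>p. {..n-p}). G p q) = (\<Sum>p\<le>n. \<Sum>q\<le>n-p. G p q)"
    by (rule sum.Sigma[symmetric]) auto
  also have "\<dots> = conv f (conv g h) w"
    unfolding conv_def n_def[symmetric] G_def
    by (rule sum.cong[OF refl], simp add: sum_distrib_left n_def add.commute mult.assoc)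
  finally show "conv (conv f g) h w = conv f (conv g h) w" .
qed

lemma plab_snoc: "2 \<le> length ys \<Longrightarrow> plab L (ys @ [b]) = conv (plab L ys) (L (last ys) b)"
proof (induction L ys rule: plab.induct)
  case (2 L x y z zs)
  then show ?case by (simp add: conv_assoc)
qed auto

definition pset :: "(nat \<Rightarrow> 'v set) \<Rightarrow> 'v \<Rightarrow> 'v \<Rightarrow> nat \<Rightarrow> nat \<Rightarrow> 'v list set" where
  "pset V a b i k = {xs. length xs = Suc (k - i) \<and> (\<forall>t\<le>k - i. xs ! t \<in> V (i + t))
               \<and> hd xs = a \<and> last xs = b}"

lemma psum_pset: "psum V L a b i k = (\<Sum>xs\<in>pset V a b i k. plab L xs)"
  unfolding psum_def pset_def ..

lemma finite_pset:
  assumes "\<forall>t. i \<le> t \<and> t \<le> k \<longrightarrow> finite (V t)" "i \<le> k"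
  shows "finite (pset V a b i k)"
proof -
  have "pset V a b i k \<subseteq> {xs. set xs \<subseteq> (\<Union>t\<in>{i..k}. V t) \<and> length xs = Suc (k - i)}"
  proof
    fix xs assume xs: "xs \<in> pset V a b i k"
    have "set xs \<subseteq> (\<Union>t\<in>{i..k}. V t)"
    proof
      fix x assume "x \<in> set xs"
      then obtain t where t: "t < length xs" "xs ! t = x" by (auto simp: in_set_conv_nth)
      with xs have "x \<in> V (i + t)" "i + t \<in> {i..k}" using assms(2) unfolding pset_def by auto
      then show "x \<in> (\<Union>t\<in>{i..k}. V t)" by blast
    qed
    with xs show "xs \<in> {xs. set xs \<subseteq> (\<Union>t\<in>{i..k}. V t) \<and> length xs = Suc (k - i)}"
      unfolding pset_def by auto
  qed
  moreover have "finite (\<Union>t\<in>{i..k}. V t)" using assms(1) by auto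
  then have "finite {xs. set xs \<subseteq> (\<Union>t\<in>{i..k}. V t) \<and> length xs = Suc (k - i)}"
    by (rule finite_lists_length_eq)
  ultimately show ?thesis by (rule finite_subset)
qed

lemma pset_step: "pset V a b i (Suc i) = (if a \<in> V i \<and> b \<in> V (Suc i) then {[a,b]} else {})"
proof -
  have "xs \<in> pset V a b i (Suc i) \<longleftrightarrow> a \<in> V i \<and> b \<in> V (Suc i) \<and> xs = [a,b]" for xs
  proof
    assume "xs \<in> pset V a b i (Suc i)"
    then have "length xs = 2" "xs!0 \<in> V i" "xs!1 \<in> V (Suc i)" "hd xs = a" "last xs = b"
      unfolding pset_def by auto
    then show "a \<in> V i \<and> b \<in> V (Suc i) \<and> xs = [a,b]"
      by (cases xs; cases "tl xs"; auto)
  next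
    assume "a \<in> V i \<and> b \<in> V (Suc i) \<and> xs = [a,b]"
    then show "xs \<in> pset V a b i (Suc i)" unfolding pset_def
      by (auto simp: le_Suc_eq)
  qed
  then show ?thesis by auto
qed

lemma psum_step: "psum V L a b i (Suc i) = (if a \<in> V i \<and> b \<in> V (Suc i) then L a b else 0)"
  unfolding psum_pset pset_step by simp

lemma pset_snoc:
  assumes "Suc i < k" "b \<in> V k"
  shows "pset V a b i k = (\<lambda>ys. ys @ [b]) ` (\<Union>u\<in>V (k-1). pset V a u i (k-1))"
proof (rule set_eqI, rule iffI)
  fix xs assume xs: "xs \<in> pset V a b i k"
  then have len: "length xs = Suc (k - i)" and mem: "\<forall>t\<le>k - i. xs ! t \<in> V (i + t)"
    and hd: "hd xs = a" and last: "last xs = b" unfolding pset_def by auto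
  define ys where "ys = butlast xs"
  have ne: "xs \<noteq> []" using len by auto
  have xsys: "xs = ys @ [b]" using ne last unfolding ys_def by (metis append_butlast_last_id)
  have leny: "length ys = k - i" using len unfolding ys_def by simp
  have nth: "ys ! t = xs ! t" if "t < length ys" for t
    using that unfolding ys_def by (simp add: nth_butlast)
  have "ys \<in> pset V a (last ys) i (k-1)"
    unfolding pset_def
  proof (intro CollectI conjI allI impI)
    show "length ys = Suc (k - 1 - i)" using leny assms by simp
    fix t assume "t \<le> k - 1 - i"
    then have "t < length ys" "t \<le> k - i" using leny assms by auto
    then show "ys ! t \<in> V (i + t)" using nth mem by auto
  next
    have "ys \<noteq> []" using leny assms by auto
    then show "hd ys = a" using hd xsys by simp
  qed simp
  moreover have "last ys \<in> V (k-1)"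
  proof -
    have "ys \<noteq> []" using leny assms by auto
    then have "last ys = ys ! (k - 1 - i)" using leny assms by (simp add: last_conv_nth)
    also have "\<dots> = xs ! (k - 1 - i)" using nth leny assms by simp
    also have "\<dots> \<in> V (i + (k - 1 - i))" using mem by simp
    finally show ?thesis using assms by simp
  qed
  ultimately show "xs \<in> (\<lambda>ys. ys @ [b]) ` (\<Union>u\<in>V (k-1). pset V a u i (k-1))"
    using xsys by blast
next
  fix xs assume "xs \<in> (\<lambda>ys. ys @ [b]) ` (\<Union>u\<in>V (k-1). pset V a u i (k-1))"
  then obtain u ys where u: "u \<in> V (k-1)" and ys: "ys \<in> pset V a u i (k-1)" and xs: "xs = ys @ [b]"
    by auto
  from ys have len: "length ys = Suc (k - 1 - i)" and mem: "\<forall>t\<le>k - 1 - i. ys ! t \<in> V (i + t)"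
    and hd: "hd ys = a" unfolding pset_def by auto
  show "xs \<in> pset V a b i k" unfolding pset_def
  proof (intro CollectI conjI allI impI)
    show "length xs = Suc (k - i)" using len xs assms by simp
    fix t assume t: "t \<le> k - i"
    show "xs ! t \<in> V (i + t)"
    proof (cases "t < length ys")
      case True then show ?thesis using mem len xs by (simp add: nth_append)
    next
      case False then have "t = k - i" using t len assms by simp
      then show ?thesis using False len xs assms by (simp add: nth_append)
    qed
  next
    show "hd xs = a" using len hd xs by (cases ys) auto
    show "last xs = b" using xs by simp
  qed
qed

lemma pset_notin: "b \<notin> V k \<Longrightarrow> i \<le> k \<Longrightarrow> pset V a b i k = {}"
proof (rule ccontr)
  assume "b \<notin> V k" "i \<le> k" "pset V a b i k \<noteq> {}"
  then obtain xs where xs: "xs \<in> pset V a b i k" by auto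
  then have "length xs = Suc (k - i)" "xs ! (k-i) \<in> V (i + (k - i))" "last xs = b"
    unfolding pset_def by auto
  then have "last xs = xs ! (k - i)" by (metis last_conv_nth list.size(3) nat.distinct(1) diff_Suc_1)
  then have "b \<in> V k" using \<open>i \<le> k\<close> \<open>xs ! (k-i) \<in> V (i + (k - i))\<close> \<open>last xs = b\<close> by simp
  with \<open>b \<notin> V k\<close> show False by simp
qed

lemma psum_snoc:
  assumes "Suc i < k" "\<forall>t. i \<le> t \<and> t \<le> k \<longrightarrow> finite (V t)"
  shows "psum V L a b i k = (if b \<in> V k then (\<Sum>u\<in>V (k-1). conv (psum V L a u i (k-1)) (L u b)) else 0)"
proof (cases "b \<in> V k")
  case False then show ?thesis using assms unfolding psum_pset by (simp add: pset_notin)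
next
  case True
  have fin: "finite (pset V a u i (k-1))" for u
    using assms by (intro finite_pset) auto
  have inj: "inj_on (\<lambda>ys. ys @ [b]) X" for X by (rule inj_onI) simp
  have disj: "\<forall>u\<in>V (k-1). \<forall>u'\<in>V (k-1). u \<noteq> u' \<longrightarrow> pset V a u i (k-1) \<inter> pset V a u' i (k-1) = {}"
    unfolding pset_def by auto
  have len2: "ys \<in> pset V a u i (k-1) \<Longrightarrow> 2 \<le> length ys" for ys u
    using assms unfolding pset_def by auto
  have lst: "ys \<in> pset V a u i (k-1) \<Longrightarrow> last ys = u" for ys u
    unfolding pset_def by auto
  have "psum V L a b i k = (\<Sum>ys\<in>(\<Union>u\<in>V (k-1). pset V a u i (k-1)). plab L (ys @ [b]))"
    unfolding psum_pset pset_snoc[where i=i and k=k and b=b and V=V and a=a, OF assms(1) True] by (simp add: sum.reindex[OF inj])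
  also have "\<dots> = (\<Sum>u\<in>V (k-1). \<Sum>ys\<in>pset V a u i (k-1). plab L (ys @ [b]))"
  proof (rule sum.UNION_disjoint)
    show "finite (V (k-1))" using assms by auto
  qed (use fin disj in auto)
  also have "\<dots> = (\<Sum>u\<in>V (k-1). \<Sum>ys\<in>pset V a u i (k-1). conv (plab L ys) (L u b))"
  proof (intro sum.cong refl)
    fix u ys assume "ys \<in> pset V a u i (k-1)"
    then show "plab L (ys @ [b]) = conv (plab L ys) (L u b)"
      using len2[of ys u] lst[of ys u] plab_snoc[of ys L b] by simp
  qed
  also have "\<dots> = (\<Sum>u\<in>V (k-1). conv (psum V L a u i (k-1)) (L u b))"
    unfolding psum_pset by (simp add: conv_sum_left)
  finally show ?thesis using True by simp
qed


lemma psum_split: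
  assumes "i < m" "m < k" "\<forall>t. i \<le> t \<and> t \<le> k \<longrightarrow> finite (V t)"
  shows "psum V L a b i k = (\<Sum>u\<in>V m. conv (psum V L a u i m) (psum V L u b m k))"
proof -
  have "Suc m \<le> k" using assms by simp
  then have "(\<forall>t. i \<le> t \<and> t \<le> k \<longrightarrow> finite (V t)) \<longrightarrow> (\<forall>b. psum V L a b i k = (\<Sum>u\<in>V m. conv (psum V L a u i m) (psum V L u b m k)))"
  proof (induction k rule: dec_induct)
    case base
    show ?case
    proof (intro impI allI)
      fix b assume fin: "\<forall>t. i \<le> t \<and> t \<le> Suc m \<longrightarrow> finite (V t)"
      have "psum V L a b i (Suc m) = (if b \<in> V (Suc m) then (\<Sum>u\<in>V m. conv (psum V L a u i m) (L u b)) else 0)"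
        using psum_snoc[of i "Suc m" V L a b] assms fin by simp
      also have "\<dots> = (\<Sum>u\<in>V m. conv (psum V L a u i m) (psum V L u b m (Suc m)))"
        by (cases "b \<in> V (Suc m)") (simp_all add: psum_step)
      finally show "psum V L a b i (Suc m) = (\<Sum>u\<in>V m. conv (psum V L a u i m) (psum V L u b m (Suc m)))" .
    qed
  next
    case (step n)
    show ?case
    proof (intro impI allI)
      fix b assume fin: "\<forall>t. i \<le> t \<and> t \<le> Suc n \<longrightarrow> finite (V t)"
      then have IH: "\<And>w. psum V L a w i n = (\<Sum>u\<in>V m. conv (psum V L a u i m) (psum V L u w m n))"
        using step by auto
      have finVn: "finite (V n)" "finite (V m)" using fin step assms by auto
      show "psum V L a b i (Suc n) = (\<Sum>u\<in>V m. conv (psum V L a u i m) (psum V L u b m (Suc n)))"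
      proof (cases "b \<in> V (Suc n)")
        case False
        have "psum V L a b i (Suc n) = 0" using psum_snoc[of i "Suc n" V L a b] assms fin step False by simp
        moreover have "psum V L u b m (Suc n) = 0" for u
          using psum_snoc[of m "Suc n" V L u b] assms fin step False by simp
        ultimately show ?thesis by simp
      next
        case True
        have "psum V L a b i (Suc n) = (\<Sum>w\<in>V n. conv (psum V L a w i n) (L w b))"
          using psum_snoc[of i "Suc n" V L a b] assms fin step True by simp
        also have "\<dots> = (\<Sum>w\<in>V n. \<Sum>u\<in>V m. conv (psum V L a u i m) (conv (psum V L u w m n) (L w b)))"
          by (simp add: IH conv_sum_left conv_assoc)
        also have "\<dots> = (\<Sum>u\<in>V m. \<Sum>w\<in>V n. conv (psum V L a u i m) (conv (psum V L u w m n) (L w b)))"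
          by (rule sum.swap)
        also have "\<dots> = (\<Sum>u\<in>V m. conv (psum V L a u i m) (psum V L u b m (Suc n)))"
        proof (intro sum.cong refl)
          fix u
          have "psum V L u b m (Suc n) = (\<Sum>w\<in>V n. conv (psum V L u w m n) (L w b))"
            using psum_snoc[of m "Suc n" V L u b] assms fin step True by simp
          then show "(\<Sum>w\<in>V n. conv (psum V L a u i m) (conv (psum V L u w m n) (L w b)))
              = conv (psum V L a u i m) (psum V L u b m (Suc n))"
            by (simp add: conv_sum_right)
        qed
        finally show ?thesis .
      qed
    qed
  qed
  then show ?thesis using assms by blast
qed

lemma psum_cons:
  assumes "Suc i < k" "\<forall>t. i \<le> t \<and> t \<le> k \<longrightarrow> finite (V t)"
  shows "psum V L a b i k = (if a \<in> V i then (\<Sum>u\<in>V (Suc i). conv (L a u) (psum V L u b (Suc i) k)) else 0)"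
proof -
  have "psum V L a b i k = (\<Sum>u\<in>V (Suc i). conv (psum V L a u i (Suc i)) (psum V L u b (Suc i) k))"
    using psum_split[of i "Suc i" k V L a b] assms by simp
  also have "\<dots> = (if a \<in> V i then (\<Sum>u\<in>V (Suc i). conv (L a u) (psum V L u b (Suc i) k)) else 0)"
    by (cases "a \<in> V i") (simp_all add: psum_step)
  finally show ?thesis .
qed


theorem proposition1:
  fixes n j :: nat and V :: "nat \<Rightarrow> 'v set" and L :: "'v \<Rightarrow> 'v \<Rightarrow> ('s::finite) alg"
    and rt tr v v' :: 'v
  assumes "trellis n V L rt tr"
    and "1 \<le> j" and "j \<le> n - 1"
    and "v \<in> V j" and "v' \<in> V j" and "v \<noteq> v'"
    and "(\<lambda>w. conv (past V L rt j v) (future n V L tr j v) w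
             + conv (past V L rt j v') (future n V L tr j v') w)
       = (\<lambda>w. conv (past V L rt j v) (future n V L tr j v') w
             + conv (past V L rt j v') (future n V L tr j v) w)"
  shows "code n (merge_V V j v v') (merge_L V L j v v') (Some rt) (Some tr)
       = code n V L rt tr"
proof -
  define W where "W = merge_V V j v v'"
  define M where "M = merge_L V L j v v'"
  note tr = assms(1)[unfolded trellis_def]
  have finV: "\<forall>t. 0 \<le> t \<and> t \<le> n \<longrightarrow> finite (V t)" using tr by auto
  have disj: "\<And>s t. s \<le> n \<Longrightarrow> t \<le> n \<Longrightarrow> s \<noteq> t \<Longrightarrow> V s \<inter> V t = {}" using tr by auto
  have V0: "V 0 = {rt}" and Vn: "V n = {tr}" using tr by auto
  have jn: "j < n" "0 < j" using assms(2,3) by auto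
  have vnot: "v \<notin> V t" "v' \<notin> V t" if "t \<le> n" "t \<noteq> j" for t
    using disj[of t j] that jn assms(4,5) by auto
  have rtv: "rt \<noteq> v" "rt \<noteq> v'" using vnot[of 0] V0 jn by auto
  have trv: "tr \<noteq> v" "tr \<noteq> v'" using vnot[of n] Vn jn by auto
  have Wt: "W t = Some ` V t" if "t \<le> n" "t \<noteq> j" for t
  proof -
    have "V t - {v, v'} = V t" using vnot[OF that] by auto
    then show ?thesis using that unfolding W_def merge_V_def by simp
  qed
  have Wj: "W j = insert None (Some ` (V j - {v, v'}))" unfolding W_def merge_V_def by auto
  have SomeW: "Some u \<in> W t \<longleftrightarrow> u \<in> V t \<and> u \<notin> {v, v'}" for u t
    unfolding W_def merge_V_def by auto
  have NoneW: "None \<in> W t \<longleftrightarrow> t = j" for t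
    unfolding W_def merge_V_def by auto
  have finW: "\<forall>t. 0 \<le> t \<and> t \<le> n \<longrightarrow> finite (W t)"
    using finV unfolding W_def merge_V_def by auto
  have MSS: "M (Some a) (Some b) = L a b" if "a \<notin> {v, v'}" "b \<notin> {v, v'}" for a b
    using that unfolding M_def merge_L_def by simp
  have MSN: "M (Some a) None = (\<lambda>w. L a v w + L a v' w)" if "a \<in> V (j - 1)" for a
    using that unfolding M_def merge_L_def by simp
  have MNS: "M None (Some b) = (\<lambda>w. (1/2) * (L v b w + L v' b w))" if "b \<in> V (j + 1)" for b
    using that unfolding M_def merge_L_def by simp
  have inj: "inj_on Some X" for X :: "'v set" by simp

  have Psome: "\<forall>u. u \<notin> {v, v'} \<longrightarrow> psum W M (Some rt) (Some u) 0 m = psum V L rt u 0 m"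
    if "1 \<le> m" "m \<le> j" for m
    using that
  proof (induction m)
    case 0 then show ?case by simp
  next
    case (Suc m)
    show ?case
    proof (intro allI impI)
      fix u :: 'v assume u: "u \<notin> {v, v'}"
      show "psum W M (Some rt) (Some u) 0 (Suc m) = psum V L rt u 0 (Suc m)"
      proof (cases "m = 0")
        case True
        then show ?thesis using u rtv V0 MSS[of rt u] by (simp add: psum_step SomeW)
      next
        case False
        have fW: "\<forall>t. 0 \<le> t \<and> t \<le> Suc m \<longrightarrow> finite (W t)"
          and fV: "\<forall>t. 0 \<le> t \<and> t \<le> Suc m \<longrightarrow> finite (V t)" using finW finV Suc jn by auto
        have Wm: "W m = Some ` V m" using Wt[of m] Suc jn by simp
        have IH: "psum W M (Some rt) (Some a) 0 m = psum V L rt a 0 m" if "a \<in> V m" for a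
          using Suc.IH False Suc.prems vnot[of m] that jn by auto
        have Ma: "M (Some a) (Some u) = L a u" if "a \<in> V m" for a
          using MSS[of a u] u vnot[of m] that Suc jn by auto
        have "psum W M (Some rt) (Some u) 0 (Suc m)
            = (if Some u \<in> W (Suc m) then (\<Sum>x\<in>W m. conv (psum W M (Some rt) x 0 m) (M x (Some u))) else 0)"
          using psum_snoc[of 0 "Suc m" W M "Some rt" "Some u"] False fW by simp
        also have "\<dots> = (if u \<in> V (Suc m) then (\<Sum>a\<in>V m. conv (psum V L rt a 0 m) (L a u)) else 0)"
          unfolding Wm using u IH Ma by (simp add: sum.reindex SomeW)
        also have "\<dots> = psum V L rt u 0 (Suc m)"
          using psum_snoc[of 0 "Suc m" V L rt u] False fV by simp
        finally show ?thesis .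
      qed
    qed
  qed

  have Fsome: "\<forall>m. m + Suc d = n \<longrightarrow> j \<le> m \<longrightarrow> (\<forall>u. u \<notin> {v, v'} \<longrightarrow> psum W M (Some u) (Some tr) m n = psum V L u tr m n)" for d
  proof (induction d)
    case 0
    show ?case
    proof (intro allI impI)
      fix m u assume m: "m + Suc 0 = n" "j \<le> m" and u: "u \<notin> {v, v'}"
      then have nm: "n = Suc m" by simp
      show "psum W M (Some u) (Some tr) m n = psum V L u tr m n"
        unfolding nm using u trv MSS[of u tr] by (simp add: psum_step SomeW)
    qed
  next
    case (Suc d)
    show ?case
    proof (intro allI impI)
      fix m u assume m: "m + Suc (Suc d) = n" "j \<le> m" and u: "u \<notin> {v, v'}"
      have lt: "Suc m < n" using m by simp
      have fW: "\<forall>t. m \<le> t \<and> t \<le> n \<longrightarrow> finite (W t)"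
        and fV: "\<forall>t. m \<le> t \<and> t \<le> n \<longrightarrow> finite (V t)" using finW finV by auto
      have Wm: "W (Suc m) = Some ` V (Suc m)" using Wt[of "Suc m"] m by simp
      have IH: "psum W M (Some a) (Some tr) (Suc m) n = psum V L a tr (Suc m) n" if "a \<in> V (Suc m)" for a
        using Suc.IH m vnot[of "Suc m"] that by auto
      have Ma: "M (Some u) (Some a) = L u a" if "a \<in> V (Suc m)" for a
        using MSS[of u a] u vnot[of "Suc m"] that m by auto
      have "psum W M (Some u) (Some tr) m n
          = (if Some u \<in> W m then (\<Sum>x\<in>W (Suc m). conv (M (Some u) x) (psum W M x (Some tr) (Suc m) n)) else 0)"
        using psum_cons[of m n W M "Some u" "Some tr"] lt fW by simp
      also have "\<dots> = (if u \<in> V m then (\<Sum>a\<in>V (Suc m). conv (L u a) (psum V L a tr (Suc m) n)) else 0)"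
        unfolding Wm using u IH Ma by (simp add: sum.reindex SomeW)
      also have "\<dots> = psum V L u tr m n"
        using psum_cons[of m n V L u tr] lt fV by simp
      finally show "psum W M (Some u) (Some tr) m n = psum V L u tr m n" .
    qed
  qed
  have Fsome': "psum W M (Some u) (Some tr) m n = psum V L u tr m n"
    if "j \<le> m" "m < n" "u \<notin> {v, v'}" for u m
    using Fsome[of "n - Suc m"] that by auto

  have Pnone: "psum W M (Some rt) None 0 j = psum V L rt v 0 j + psum V L rt v' 0 j"
  proof (cases "j = 1")
    case True
    have "psum W M (Some rt) None 0 (Suc 0) = psum V L rt v 0 (Suc 0) + psum V L rt v' 0 (Suc 0)"
      using True rtv V0 MSN[of rt] assms(4,5) by (simp add: psum_step SomeW NoneW fun_eq_iff)
    then show ?thesis using True by simp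
  next
    case False
    then have j2: "Suc 0 < j" using jn by simp
    have fW: "\<forall>t. 0 \<le> t \<and> t \<le> j \<longrightarrow> finite (W t)"
      and fV: "\<forall>t. 0 \<le> t \<and> t \<le> j \<longrightarrow> finite (V t)" using finW finV jn by auto
    have Wm: "W (j-1) = Some ` V (j-1)" using Wt[of "j-1"] jn by simp
    have P: "psum W M (Some rt) (Some a) 0 (j-1) = psum V L rt a 0 (j-1)" if "a \<in> V (j-1)" for a
    proof -
      have h: "j-1 \<le> n" "j-1 \<noteq> j" "1 \<le> j-1" "j - 1 \<le> j" using j2 jn by auto
      then have "a \<notin> {v, v'}" using vnot[OF h(1,2)] that by auto
      then show ?thesis using Psome[OF h(3,4)] by blast
    qed
    have "psum W M (Some rt) None 0 j
        = (\<Sum>x\<in>W (j-1). conv (psum W M (Some rt) x 0 (j-1)) (M x None))"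
      using psum_snoc[of 0 j W M "Some rt" None] j2 fW NoneW by simp
    also have "\<dots> = (\<Sum>a\<in>V (j-1). conv (psum V L rt a 0 (j-1)) (L a v + L a v'))"
      unfolding Wm using P MSN by (simp add: sum.reindex plus_fun_def)
    also have "\<dots> = (\<Sum>a\<in>V (j-1). conv (psum V L rt a 0 (j-1)) (L a v))
                   + (\<Sum>a\<in>V (j-1). conv (psum V L rt a 0 (j-1)) (L a v'))"
      by (simp add: conv_add_right sum.distrib)
    also have "\<dots> = psum V L rt v 0 j + psum V L rt v' 0 j"
      using psum_snoc[of 0 j V L rt v] psum_snoc[of 0 j V L rt v'] j2 fV assms(4,5) by simp
    finally show ?thesis .
  qed

  have Fnone: "psum W M None (Some tr) j n = (\<lambda>w. (1/2) * (psum V L v tr j n w + psum V L v' tr j n w))"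
  proof (cases "Suc j = n")
    case True
    have "psum W M None (Some tr) j (Suc j) = (\<lambda>w. (1/2) * (psum V L v tr j (Suc j) w + psum V L v' tr j (Suc j) w))"
    proof -
      have t: "tr \<in> V (Suc j)" using True Vn by simp
      show ?thesis using t trv MNS[of tr] assms(4,5) by (simp add: psum_step SomeW NoneW)
    qed
    then show ?thesis using True by simp
  next
    case False
    then have lt: "Suc j < n" using jn by simp
    have fW: "\<forall>t. j \<le> t \<and> t \<le> n \<longrightarrow> finite (W t)"
      and fV: "\<forall>t. j \<le> t \<and> t \<le> n \<longrightarrow> finite (V t)" using finW finV by auto
    have Wm: "W (Suc j) = Some ` V (Suc j)" using Wt[of "Suc j"] lt by simp
    have F: "psum W M (Some b) (Some tr) (Suc j) n = psum V L b tr (Suc j) n" if "b \<in> V (Suc j)" for b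
      using Fsome'[of "Suc j" b] lt vnot[of "Suc j"] that by auto
    have "psum W M None (Some tr) j n
        = (\<Sum>x\<in>W (Suc j). conv (M None x) (psum W M x (Some tr) (Suc j) n))"
      using psum_cons[of j n W M None "Some tr"] lt fW NoneW by simp
    also have "\<dots> = (\<Sum>b\<in>V (Suc j). conv (\<lambda>w. (1/2) * (L v b w + L v' b w)) (psum V L b tr (Suc j) n))"
      unfolding Wm using F MNS by (simp add: sum.reindex)
    also have "\<dots> = (\<lambda>w. (1/2) * ((\<Sum>b\<in>V (Suc j). conv (L v b) (psum V L b tr (Suc j) n)) w
                     + (\<Sum>b\<in>V (Suc j). conv (L v' b) (psum V L b tr (Suc j) n)) w))"
    proof (rule ext)
      fix w
      have eq: "(\<lambda>w. (1/2) * (L v b w + L v' b w)) = (\<lambda>w. (1/2) * (L v b + L v' b) w)" for b by simp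
      show "(\<Sum>b\<in>V (Suc j). conv (\<lambda>w. (1/2) * (L v b w + L v' b w)) (psum V L b tr (Suc j) n)) w =
         (1/2) * ((\<Sum>b\<in>V (Suc j). conv (L v b) (psum V L b tr (Suc j) n)) w
                     + (\<Sum>b\<in>V (Suc j). conv (L v' b) (psum V L b tr (Suc j) n)) w)"
        unfolding eq conv_smult_left sum_fun_apply conv_add_left
        by (simp add: sum_distrib_left sum.distrib distrib_left)
    qed
    also have "\<dots> = (\<lambda>w. (1/2) * (psum V L v tr j n w + psum V L v' tr j n w))"
      using psum_cons[of j n V L v tr] psum_cons[of j n V L v' tr] lt fV assms(4,5) by simp
    finally show ?thesis .
  qed

  define P where "P = (\<lambda>u. psum V L rt u 0 j)"
  define F where "F = (\<lambda>u. psum V L u tr j n)"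
  have fin0: "\<forall>t. 0 \<le> t \<and> t \<le> n \<longrightarrow> finite (W t)" using finW by auto
  have finVj: "finite (V j)" using finV jn by auto
  have "code n W M (Some rt) (Some tr) = (\<Sum>x\<in>W j. conv (psum W M (Some rt) x 0 j) (psum W M x (Some tr) j n))"
    unfolding code_def using psum_split[of 0 j n W M "Some rt" "Some tr"] jn finW by simp
  also have "\<dots> = conv (P v + P v') (\<lambda>w. (1/2) * (F v w + F v' w))
                  + (\<Sum>u\<in>V j - {v, v'}. conv (P u) (F u))"
    unfolding Wj P_def F_def using finVj Pnone Fnone Psome[of j] Fsome'[of j] jn assms(2)
    by (simp add: sum.reindex)
  also have "conv (P v + P v') (\<lambda>w. (1/2) * (F v w + F v' w)) = conv (P v) (F v) + conv (P v') (F v')"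
  proof (rule ext)
    fix w
    have h: "conv (P v) (F v) w + conv (P v') (F v') w = conv (P v) (F v') w + conv (P v') (F v) w"
      using fun_cong[OF assms(7), of w] unfolding P_def F_def past_def future_def by simp
    have eq: "(\<lambda>w. (1/2) * (F v w + F v' w)) = (\<lambda>w. (1/2) * (F v + F v') w)" by simp
    show "conv (P v + P v') (\<lambda>w. (1/2) * (F v w + F v' w)) w = (conv (P v) (F v) + conv (P v') (F v')) w"
      unfolding eq conv_smult_right conv_add_left conv_add_right using h by simp
  qed
  also have "conv (P v) (F v) + conv (P v') (F v') + (\<Sum>u\<in>V j - {v, v'}. conv (P u) (F u))
      = (\<Sum>u\<in>V j. conv (P u) (F u))"
  proof -
    have "V j = insert v (insert v' (V j - {v, v'}))" using assms(4,5) by auto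
    then have "(\<Sum>u\<in>V j. conv (P u) (F u)) = (\<Sum>u\<in>insert v (insert v' (V j - {v, v'})). conv (P u) (F u))"
      by simp
    also have "\<dots> = conv (P v) (F v) + (conv (P v') (F v') + (\<Sum>u\<in>V j - {v, v'}. conv (P u) (F u)))"
      using finVj assms(6) by simp
    finally show ?thesis by (simp add: add.assoc)
  qed
  also have "\<dots> = code n V L rt tr"
    unfolding code_def P_def F_def using psum_split[of 0 j n V L rt tr] jn finV by simp
  finally show ?thesis unfolding W_def M_def .
qed

end
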